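(* Let $d\ge1$, $n\ge2$ be integers, $\kappa_d$ the volume of the $d$-dimensional unit ball, $V\ge0$, $c\in(0,\infty)$, $-d/2<\tau_1<\dots<\tau_n$ reals, $a_i=\tau_i+d$, $x_i=\tau_i+d/2$. Let $\Sigma_n^{\mathrm{sb}}$ have entries $\frac{Vd\kappa_d}{2(x_i+x_j)}$, $\Sigma_n^{\mathrm{sp}}$ entries $\frac{Vd^2\kappa_d^2}{a_ia_j}$, and $\Sigma_n=\Sigma_n^{\mathrm{sb}}+c\Sigma_n^{\mathrm{sp}}$ if $c\le1$, $\Sigma_n=\frac1c\Sigma_n^{\mathrm{sb}}+\Sigma_n^{\mathrm{sp}}$ if $c>1$. Write $\det(\Sigma_n-\lambda I_n)=(-1)^n\lambda^n+a_n^{(n-1)}\lambda^{n-1}+\dots+a_n^{(1)}\lambda+a_n^{(0)}$. For $k\in[n-1]$ and $I=\{i_1<\dots<i_{n-k}\}\subseteq[n]$ define $$D(I)=\Bigg(1+\sum_{j\in I}\frac{cd\kappa_d}{a_j}\Bigg(\frac{4x_j\prod_{m\in I\setminus\{j\}}(x_m+x_j)^2}{a_j\prod_{m\in I\setminus\{j\}}(x_m-x_j)^2}-\sum_{i\in I\setminus\{j\}}\frac{8x_ix_j(x_i+x_j)\prod_{l\in I\setminus\{i,j\},\,m\in\{i,j\}}(x_m+x_l)}{a_i(x_j-x_i)^2\prod_{l\in I\setminus\{i,j\},\,m\in\{i,j\}}(x_m-x_l)}\Bigg)\Bigg)\frac{\prod_{i<j\in I}(x_i-x_j)^2}{\prod_{i,j\in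 I}(x_i+x_j)},$$ and $D_k=\sum_{I\subseteq[n],\,|I|=n-k}D(I)$. Then $a_n^{(k)}=(-1)^kD_k\big(\frac{Vd\kappa_d}{2}\big)^{n-k}$ for $c\in(0,1]$, and $a_n^{(k)}=(-1)^kD_k\big(\frac{Vd\kappa_d}{2c}\big)^{n-k}$ for $c\in(1,\infty)$, for all $k\in[n-1]$.
   Context: $\Sigma_n$ is the asymptotic covariance matrix of normalized length power functionals in the critical regime. $[n]=\{1,\dots,n\}$. *)

theory Defs
  imports "HOL-Analysis.Ball_Volume" "Jordan_Normal_Form.Determinant"
begin

text \<open>Indices are shifted: the paper's index set [n] = {1..n} is rendered as {0..<n}.\<close>

definition kappa :: "nat \<Rightarrow> real" where
  "kappa d = unit_ball_vol (real d)"

definition aa :: "nat \<Rightarrow> (nat \<Rightarrow> real) \<Rightarrow> nat \<Rightarrow> real" where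
  "aa d tau i = tau i + real d"

definition xx :: "nat \<Rightarrow> (nat \<Rightarrow> real) \<Rightarrow> nat \<Rightarrow> real" where
  "xx d tau i = tau i + real d / 2"

definition Sigma_sb :: "nat \<Rightarrow> nat \<Rightarrow> real \<Rightarrow> (nat \<Rightarrow> real) \<Rightarrow> real mat" where
  "Sigma_sb n d V tau = mat n n (\<lambda>(i,j). V * real d * kappa d / (2 * (xx d tau i + xx d tau j)))"

definition Sigma_sp :: "nat \<Rightarrow> nat \<Rightarrow> real \<Rightarrow> (nat \<Rightarrow> real) \<Rightarrow> real mat" where
  "Sigma_sp n d V tau = mat n n (\<lambda>(i,j). V * (real d)^2 * (kappa d)^2 / (aa d tau i * aa d tau j))"

definition Sigma_n :: "nat \<Rightarrow> nat \<Rightarrow> real \<Rightarrow> real \<Rightarrow> (nat \<Rightarrow> real) \<Rightarrow> real mat" where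
  "Sigma_n n d V c tau =
     (if c \<le> 1 then Sigma_sb n d V tau + c \<cdot>\<^sub>m Sigma_sp n d V tau
      else (1 / c) \<cdot>\<^sub>m Sigma_sb n d V tau + Sigma_sp n d V tau)"

definition det_shift_poly :: "nat \<Rightarrow> real mat \<Rightarrow> real poly" where
  "det_shift_poly n A = Determinant.det (mat n n (\<lambda>(i,j). [:A $$ (i,j):] - (if i = j then [:0, 1:] else 0)))"

definition DI :: "nat \<Rightarrow> real \<Rightarrow> (nat \<Rightarrow> real) \<Rightarrow> nat set \<Rightarrow> real" where
  "DI d c tau I =
    (let x = xx d tau; a = aa d tau in
     (1 + (\<Sum>j\<in>I. c * real d * kappa d / a j *
        (4 * x j * (\<Prod>m\<in>I - {j}. (x m + x j)^2) / (a j * (\<Prod>m\<in>I - {j}. (x m - x j)^2))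
         - (\<Sum>i\<in>I - {j}. 8 * x i * x j * (x i + x j) *
               (\<Prod>l\<in>I - {i,j}. \<Prod>m\<in>{i,j}. (x m + x l))
             / (a i * (x j - x i)^2 * (\<Prod>l\<in>I - {i,j}. \<Prod>m\<in>{i,j}. (x m - x l)))))))
     * (\<Prod>(i,j)\<in>{(i,j). i \<in> I \<and> j \<in> I \<and> i < j}. (x i - x j)^2)
     / (\<Prod>(i,j)\<in>I \<times> I. (x i + x j)))"

definition Dk :: "nat \<Rightarrow> nat \<Rightarrow> real \<Rightarrow> (nat \<Rightarrow> real) \<Rightarrow> nat \<Rightarrow> real" where
  "Dk n d c tau k = (\<Sum>I | I \<subseteq> {0..<n} \<and> card I = n - k. DI d c tau I)"

end

theory Submission
  imports Defs
begin

lemma mat_cong: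
  assumes "\<And>i j. i < n \<Longrightarrow> j < m \<Longrightarrow> F i j = G i j"
  shows "mat n m (\<lambda>(i,j). F i j) = mat n m (\<lambda>(i,j). G i j)"
  by (rule eq_matI) (auto simp: assms)

lemma det_mat_leibniz:
  "det (mat n n (\<lambda>(i,j). g i j)) = (\<Sum>p\<in>{p. p permutes {0..<n}}. signof p * (\<Prod>i=0..<n. g i (p i)))"
  by (subst det_def'[of _ n]) (auto intro!: sum.cong prod.cong simp: permutes_in_image)

lemma det_scale:
  fixes f :: "nat \<Rightarrow> nat \<Rightarrow> 'a::comm_ring_1"
  shows "det (mat n n (\<lambda>(i,j). a i * b j * f i j)) = prod a {0..<n} * prod b {0..<n} * det (mat n n (\<lambda>(i,j). f i j))"
proof -
  have "signof p * (\<Prod>i=0..<n. a i * b (p i) * f i (p i)) = prod a {0..<n} * prod b {0..<n} * (signof p * (\<Prod>i=0..<n. f i (p i)))"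
    if p: "p permutes {0..<n}" for p
  proof -
    have "(\<Prod>i=0..<n. b (p i)) = prod b {0..<n}"
      using prod.permute[OF p, of b] by (simp add: comp_def)
    then show ?thesis by (simp add: prod.distrib)
  qed
  then show ?thesis unfolding det_mat_leibniz by (simp add: sum_distrib_left)
qed

lemma det_rowop:
  fixes f :: "nat \<Rightarrow> nat \<Rightarrow> 'a::comm_ring_1"
  assumes k: "k < n" and ck: "c k = 0"
  shows "det (mat n n (\<lambda>(i,j). f i j + c i * f k j)) = det (mat n n (\<lambda>(i,j). f i j))"
proof -
  have "det (mat n n (\<lambda>(i,j). f i j + (if i < t then c i else 0) * f k j)) = det (mat n n (\<lambda>(i,j). f i j))" for t
  proof (induction t)
    case 0 then show ?case by simp
  next
    case (Suc t)
    let ?A = "mat n n (\<lambda>(i,j). f i j + (if i < t then c i else 0) * f k j)"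
    show ?case
    proof (cases "t < n \<and> t \<noteq> k")
      case True
      have "mat n n (\<lambda>(i,j). f i j + (if i < Suc t then c i else 0) * f k j) = addrow (c t) t k ?A"
        by (rule eq_matI) (auto simp: mat_addrow_def ck k algebra_simps)
      moreover have "det (addrow (c t) t k ?A) = det ?A"
        by (rule det_addrow) (use True k in auto)
      ultimately show ?thesis using Suc by simp
    next
      case False
      have "mat n n (\<lambda>(i,j). f i j + (if i < Suc t then c i else 0) * f k j) = ?A"
        by (rule eq_matI) (use False ck in \<open>auto elim!: less_SucE\<close>)
      then show ?thesis using Suc by simp
    qed
  qed
  from this[of n] have "det (mat n n (\<lambda>(i,j). f i j + (if i < n then c i else 0) * f k j)) = det (mat n n (\<lambda>(i,j). f i j))" .
  moreover have "mat n n (\<lambda>(i,j). f i j + (if i < n then c i else 0) * f k j) = mat n n (\<lambda>(i,j). f i j + c i * f k j)"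
    by (rule mat_cong) simp
  ultimately show ?thesis by simp
qed

lemma det_transpose_mat:
  fixes f :: "nat \<Rightarrow> nat \<Rightarrow> 'a::comm_ring_1"
  shows "det (mat n n (\<lambda>(i,j). f j i)) = det (mat n n (\<lambda>(i,j). f i j))"
proof -
  have "mat n n (\<lambda>(i,j). f j i) = transpose_mat (mat n n (\<lambda>(i,j). f i j))"
    by (rule eq_matI) auto
  then show ?thesis using det_transpose[of "mat n n (\<lambda>(i,j). f i j)" n] by simp
qed

lemma det_colop:
  fixes f :: "nat \<Rightarrow> nat \<Rightarrow> 'a::comm_ring_1"
  assumes k: "k < n" and ck: "c k = 0"
  shows "det (mat n n (\<lambda>(i,j). f i j + c j * f i k)) = det (mat n n (\<lambda>(i,j). f i j))"
proof -
  have "det (mat n n (\<lambda>(i,j). f i j + c j * f i k)) = det (mat n n (\<lambda>(i,j). f j i + c i * f j k))"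
    using det_transpose_mat[of n "\<lambda>a b. f b a + c a * f b k"] by simp
  also have "\<dots> = det (mat n n (\<lambda>(i,j). f j i))"
    using det_rowop[of k n c "\<lambda>a b. f b a", OF k ck] by simp
  also have "\<dots> = det (mat n n (\<lambda>(i,j). f i j))" by (rule det_transpose_mat)
  finally show ?thesis .
qed

lemma det_last_row:
  fixes g :: "nat \<Rightarrow> nat \<Rightarrow> 'a::comm_ring_1"
  assumes "\<And>j. j < n \<Longrightarrow> g n j = 0" and "g n n = 1"
  shows "det (mat (Suc n) (Suc n) (\<lambda>(i,j). g i j)) = det (mat n n (\<lambda>(i,j). g i j))"
proof -
  let ?A = "mat (Suc n) (Suc n) (\<lambda>(i,j). g i j)"
  have "det ?A = (\<Sum>j<Suc n. ?A $$ (n,j) * cofactor ?A n j)"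
    by (rule laplace_expansion_row) auto
  also have "\<dots> = cofactor ?A n n"
    using assms by (simp add: sum.lessThan_Suc)
  also have "mat_delete ?A n n = mat n n (\<lambda>(i,j). g i j)"
    by (rule eq_matI) (auto simp: mat_delete_def)
  then have "cofactor ?A n n = det (mat n n (\<lambda>(i,j). g i j))"
    by (simp add: cofactor_def)
  finally show ?thesis .
qed

lemma prod_if_less_Suc:
  "(\<Prod>i\<in>{0..<Suc n}. if i < n then f i else 1) = (\<Prod>i<n. f i)"
  by (simp add: prod.atLeast0_lessThan_Suc atLeast0LessThan)

definition Vs :: "(nat \<Rightarrow> 'a::comm_ring_1) \<Rightarrow> nat \<Rightarrow> 'a" where
  "Vs x n = (\<Prod>j<n. \<Prod>i<j. (x j - x i))"

lemma cauchy_det: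
  fixes x y :: "nat \<Rightarrow> 'a::field"
  assumes "\<And>i j. i < n \<Longrightarrow> j < n \<Longrightarrow> x i + y j \<noteq> 0"
  shows "det (mat n n (\<lambda>(i,j). 1 / (x i + y j))) = Vs x n * Vs y n / (\<Prod>i<n. \<Prod>j<n. (x i + y j))"
  using assms
proof (induction n)
  case 0
  then show ?case by (simp add: Vs_def det_def)
next
  case (Suc n)
  have nz: "\<And>i j. i \<le> n \<Longrightarrow> j \<le> n \<Longrightarrow> x i + y j \<noteq> 0" using Suc.prems by auto
  have IH: "det (mat n n (\<lambda>(i,j). 1 / (x i + y j))) = Vs x n * Vs y n / (\<Prod>i<n. \<Prod>j<n. (x i + y j))"
    using Suc.IH Suc.prems by auto
  define C where "C = (\<lambda>i j. 1 / (x i + y j))"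
  define cr where "cr = (\<lambda>i::nat. if i < n then -1 else (0::'a))"
  define a where "a = (\<lambda>i. if i < n then x n - x i else 1)"
  define b where "b = (\<lambda>j. 1 / (x n + y j))"
  define H where "H = (\<lambda>i j. if i < n then 1 / (x i + y j) else 1)"
  define a' where "a' = (\<lambda>i. if i < n then 1 / (x i + y n) else 1)"
  define b' where "b' = (\<lambda>j. if j < n then y n - y j else 1)"
  define K where "K = (\<lambda>i j. if i < n then (if j < n then 1 / (x i + y j) else 1) else (if j < n then 0 else (1::'a)))"
  have s1: "det (mat (Suc n) (Suc n) (\<lambda>(i,j). C i j)) = det (mat (Suc n) (Suc n) (\<lambda>(i,j). C i j + cr i * C n j))"
    by (rule det_rowop[symmetric]) (auto simp: cr_def)
  have s2: "mat (Suc n) (Suc n) (\<lambda>(i,j). C i j + cr i * C n j) = mat (Suc n) (Suc n) (\<lambda>(i,j). a i * b j * H i j)"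
  proof (rule mat_cong)
    fix i j assume ij: "i < Suc n" "j < Suc n"
    then have h1: "x i + y j \<noteq> 0" and h2: "x n + y j \<noteq> 0" using nz by auto
    show "C i j + cr i * C n j = a i * b j * H i j"
    proof (cases "i < n")
      case True then show ?thesis using h1 h2 by (simp add: C_def cr_def a_def b_def H_def field_simps)
    next
      case False then have "i = n" using ij by simp
      then show ?thesis using h2 by (simp add: C_def cr_def a_def b_def H_def)
    qed
  qed
  have s3: "det (mat (Suc n) (Suc n) (\<lambda>(i,j). H i j)) = det (mat (Suc n) (Suc n) (\<lambda>(i,j). H i j + cr j * H i n))"
    by (rule det_colop[symmetric]) (auto simp: cr_def)
  have s4: "mat (Suc n) (Suc n) (\<lambda>(i,j). H i j + cr j * H i n) = mat (Suc n) (Suc n) (\<lambda>(i,j). a' i * b' j * K i j)"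
  proof (rule mat_cong)
    fix i j assume ij: "i < Suc n" "j < Suc n"
    then have h1: "x i + y j \<noteq> 0" and h2: "x i + y n \<noteq> 0" using nz by auto
    show "H i j + cr j * H i n = a' i * b' j * K i j"
    proof (cases "i < n")
      case True
      show ?thesis
      proof (cases "j < n")
        case True
        have "1 / (x i + y j) - 1 / (x i + y n) = 1 / (x i + y n) * (y n - y j) * (1 / (x i + y j))"
          using h1 h2 by (simp add: field_simps)
        then show ?thesis using True \<open>i < n\<close> by (simp add: H_def cr_def a'_def b'_def K_def)
      next
        case False
        then have "j = n" using ij by simp
        then show ?thesis using \<open>i < n\<close> by (simp add: H_def cr_def a'_def b'_def K_def)
      qed
    next
      case False then have "i = n" using ij by simp
      then show ?thesis using ij by (auto simp: H_def cr_def a'_def b'_def K_def)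
    qed
  qed
  have s5: "det (mat (Suc n) (Suc n) (\<lambda>(i,j). K i j)) = det (mat n n (\<lambda>(i,j). K i j))"
    by (rule det_last_row) (auto simp: K_def)
  have s6: "mat n n (\<lambda>(i,j). K i j) = mat n n (\<lambda>(i,j). 1 / (x i + y j))"
    by (rule mat_cong) (auto simp: K_def)
  have det_eq: "det (mat (Suc n) (Suc n) (\<lambda>(i,j). 1 / (x i + y j))) = prod a {0..<Suc n} * prod b {0..<Suc n} * (prod a' {0..<Suc n} * prod b' {0..<Suc n} * det (mat n n (\<lambda>(i,j). 1 / (x i + y j))))"
    using s1 s2 s3 s4 s5 s6 det_scale[of "Suc n" a b H] det_scale[of "Suc n" a' b' K] unfolding C_def by simp
  have pa: "prod a {0..<Suc n} = (\<Prod>i<n. x n - x i)"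
    unfolding a_def by (rule prod_if_less_Suc)
  have pa': "prod a' {0..<Suc n} = 1 / (\<Prod>i<n. x i + y n)"
    unfolding a'_def prod_if_less_Suc by (simp add: prod_dividef)
  have pb': "prod b' {0..<Suc n} = (\<Prod>j<n. y n - y j)"
    unfolding b'_def by (rule prod_if_less_Suc)
  have pb: "prod b {0..<Suc n} = 1 / ((\<Prod>j<n. x n + y j) * (x n + y n))"
    unfolding b_def by (simp add: prod_dividef atLeast0LessThan[symmetric] prod.atLeast0_lessThan_Suc)
  have vx: "Vs x (Suc n) = Vs x n * (\<Prod>i<n. x n - x i)" by (simp add: Vs_def)
  have vy: "Vs y (Suc n) = Vs y n * (\<Prod>i<n. y n - y i)" by (simp add: Vs_def)
  have dd: "(\<Prod>i<Suc n. \<Prod>j<Suc n. (x i + y j)) = (\<Prod>i<n. \<Prod>j<n. (x i + y j)) * (\<Prod>i<n. x i + y n) * ((\<Prod>j<n. x n + y j) * (x n + y n))"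
    by (simp add: prod.distrib)
  have nz1: "(\<Prod>i<n. \<Prod>j<n. (x i + y j)) \<noteq> 0" using nz by (simp add: prod_zero_iff)
  have nz2: "(\<Prod>i<n. x i + y n) \<noteq> 0" using nz by (simp add: prod_zero_iff)
  have nz3: "(\<Prod>j<n. x n + y j) \<noteq> 0" using nz by (simp add: prod_zero_iff)
  have nz4: "x n + y n \<noteq> 0" using nz by simp
  show ?case
    unfolding det_eq pa pa' pb pb' IH vx vy dd
    using nz1 nz2 nz3 nz4 by (simp add: field_simps)
qed

lemma det_replace_row:
  fixes f :: "nat \<Rightarrow> nat \<Rightarrow> 'a::comm_ring_1"
  assumes t: "t < m"
  shows "det (mat m m (\<lambda>(i,j). if i = t then v j else f i j)) = (\<Sum>j<m. v j * cofactor (mat m m (\<lambda>(i,j). f i j)) t j)"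
proof -
  let ?R = "mat m m (\<lambda>(i,j). if i = t then v j else f i j)"
  have "det ?R = (\<Sum>j<m. ?R $$ (t,j) * cofactor ?R t j)"
    by (rule laplace_expansion_row) (use t in auto)
  also have "\<dots> = (\<Sum>j<m. v j * cofactor (mat m m (\<lambda>(i,j). f i j)) t j)"
  proof (rule sum.cong[OF refl])
    fix j assume j: "j \<in> {..<m}"
    have "mat_delete ?R t j = mat_delete (mat m m (\<lambda>(i,j). f i j)) t j"
      by (rule eq_matI) (use t j in \<open>auto simp: mat_delete_def\<close>)
    then show "?R $$ (t,j) * cofactor ?R t j = v j * cofactor (mat m m (\<lambda>(i,j). f i j)) t j"
      using t j by (simp add: cofactor_def)
  qed
  finally show ?thesis .
qed

lemma det_rank_one:
  fixes C :: "nat \<Rightarrow> nat \<Rightarrow> 'a::comm_ring_1"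
  shows "det (mat m m (\<lambda>(i,j). C i j + \<beta> * u i * u j)) =
    det (mat m m (\<lambda>(i,j). C i j)) + \<beta> * (\<Sum>i<m. \<Sum>j<m. u i * u j * cofactor (mat m m (\<lambda>(i,j). C i j)) i j)"
proof -
  define M where "M = (\<lambda>t i j. C i j + (if i < t then \<beta> * u i * u j else 0))"
  have "t \<le> m \<Longrightarrow> det (mat m m (\<lambda>(i,j). M t i j)) =
    det (mat m m (\<lambda>(i,j). C i j)) + \<beta> * (\<Sum>i<t. \<Sum>j<m. u i * u j * cofactor (mat m m (\<lambda>(i,j). C i j)) i j)" for t
  proof (induction t)
    case 0
    have "mat m m (\<lambda>(i,j). M 0 i j) = mat m m (\<lambda>(i,j). C i j)"
      by (rule mat_cong) (simp add: M_def)
    then show ?case by simp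
  next
    case (Suc t)
    then have t: "t < m" by simp
    have e1: "mat m m (\<lambda>(i,j). M (Suc t) i j) = mat m m (\<lambda>(i,j). if i = t then C t j + \<beta> * u t * u j else M t i j)"
      by (rule mat_cong) (auto simp: M_def)
    have e2: "mat m m (\<lambda>(i,j). M t i j) = mat m m (\<lambda>(i,j). if i = t then C t j else M t i j)"
      by (rule mat_cong) (auto simp: M_def)
    have d1: "det (mat m m (\<lambda>(i,j). M (Suc t) i j)) = (\<Sum>j<m. (C t j + \<beta> * u t * u j) * cofactor (mat m m (\<lambda>(i,j). M t i j)) t j)"
      unfolding e1 by (rule det_replace_row[OF t])
    have d2: "det (mat m m (\<lambda>(i,j). M t i j)) = (\<Sum>j<m. C t j * cofactor (mat m m (\<lambda>(i,j). M t i j)) t j)"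
      by (subst e2) (rule det_replace_row[OF t])
    have d3: "det (mat m m (\<lambda>(i,j). if i = t then u j else M t i j)) = (\<Sum>j<m. u j * cofactor (mat m m (\<lambda>(i,j). M t i j)) t j)"
      by (rule det_replace_row[OF t])
    define F where "F = (\<lambda>i j. if i = t then u j else M t i j)"
    define c where "c = (\<lambda>i. if i < t then - (\<beta> * u i) else 0)"
    have d4: "det (mat m m (\<lambda>(i,j). F i j + c i * F t j)) = det (mat m m (\<lambda>(i,j). F i j))"
      by (rule det_rowop[OF t]) (simp add: c_def)
    have e3: "mat m m (\<lambda>(i,j). F i j + c i * F t j) = mat m m (\<lambda>(i,j). if i = t then u j else C i j)"
      by (rule mat_cong) (auto simp: F_def c_def M_def)
    have d5: "det (mat m m (\<lambda>(i,j). if i = t then u j else C i j)) = (\<Sum>j<m. u j * cofactor (mat m m (\<lambda>(i,j). C i j)) t j)"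
      by (rule det_replace_row[OF t])
    have key: "(\<Sum>j<m. u j * cofactor (mat m m (\<lambda>(i,j). M t i j)) t j) = (\<Sum>j<m. u j * cofactor (mat m m (\<lambda>(i,j). C i j)) t j)"
      using d3 d4 e3 d5 unfolding F_def by simp
    have "det (mat m m (\<lambda>(i,j). M (Suc t) i j)) = det (mat m m (\<lambda>(i,j). M t i j)) + \<beta> * u t * (\<Sum>j<m. u j * cofactor (mat m m (\<lambda>(i,j). M t i j)) t j)"
      unfolding d1 d2 by (simp add: algebra_simps sum.distrib sum_distrib_left)
    also have "\<dots> = det (mat m m (\<lambda>(i,j). C i j)) + \<beta> * (\<Sum>i<Suc t. \<Sum>j<m. u i * u j * cofactor (mat m m (\<lambda>(i,j). C i j)) i j)"
      unfolding key using Suc by (simp add: algebra_simps sum_distrib_left)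
    finally show ?case .
  qed
  note h = this[of m, OF order_refl]
  have "mat m m (\<lambda>(i,j). M m i j) = mat m m (\<lambda>(i,j). C i j + \<beta> * u i * u j)"
      by (rule mat_cong) (simp add: M_def)
  with h show ?thesis by simp
qed


lemma coeff_signof: "coeff (signof p * (q :: 'a::comm_ring_1 poly)) k = signof p * coeff q k"
  by (simp add: sign_def)

lemma mX: "(- [:0, 1:] :: 'a::comm_ring_1 poly) ^ j = monom ((-1)^j) j"
proof -
  have "(- [:0, 1:] :: 'a poly) = monom (-1) 1" by (simp add: monom_Suc monom_0)
  then show ?thesis by (simp add: monom_power)
qed

lemma coeff_mX: "coeff ((- [:0, 1:] :: 'a::comm_ring_1 poly) ^ j * [:c:]) k = (if j = k then (-1)^k * c else 0)"
  unfolding mX by (simp add: coeff_monom_mult)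

definition pdet :: "(nat \<Rightarrow> nat \<Rightarrow> 'a::comm_ring_1) \<Rightarrow> nat set \<Rightarrow> 'a" where
  "pdet f I = (\<Sum>p\<in>{p. p permutes I}. signof p * (\<Prod>i\<in>I. f i (p i)))"

lemma prod_fix:
  assumes "finite S"
  shows "(\<Prod>i\<in>S. - (if p i = i then X else 0)) = (if \<forall>i\<in>S. p i = i then (- X) ^ card S else (0 :: 'a::comm_ring_1))"
proof (cases "\<forall>i\<in>S. p i = i")
  case True
  then have "(\<Prod>i\<in>S. - (if p i = i then X else 0)) = (\<Prod>i\<in>S. - X)" by (intro prod.cong) auto
  then show ?thesis using True by simp
next
  case False
  then obtain i where "i \<in> S" "p i \<noteq> i" by auto
  then show ?thesis using assms False by (intro trans[OF prod_zero]) auto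
qed

lemma permutes_fix_iff:
  assumes "S \<subseteq> N"
  shows "(p permutes N \<and> (\<forall>i\<in>S. p i = i)) \<longleftrightarrow> p permutes (N - S)"
proof
  assume h: "p permutes N \<and> (\<forall>i\<in>S. p i = i)"
  show "p permutes (N - S)"
    unfolding permutes_def
  proof (intro conjI allI impI)
    fix x assume "x \<notin> N - S"
    then show "p x = x" using h permutes_not_in[of p N x] by auto
  next
    fix y show "\<exists>!x. p x = y" using h unfolding permutes_def by blast
  qed
next
  assume h: "p permutes (N - S)"
  then show "p permutes N \<and> (\<forall>i\<in>S. p i = i)"
    using permutes_subset[OF h, of N] permutes_not_in[OF h] by auto
qed

lemma charpoly_coeff:
  fixes A :: "nat \<Rightarrow> nat \<Rightarrow> 'a::comm_ring_1"
  assumes k: "k \<le> n"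
  shows "coeff (det (mat n n (\<lambda>(i,j). [:A i j:] - (if i = j then [:0, 1:] else 0)))) k =
    (-1)^k * (\<Sum>I | I \<subseteq> {0..<n} \<and> card I = n - k. pdet A I)"
proof -
  let ?N = "{0..<n}"
  let ?X = "[:0, 1:] :: 'a poly"
  have fN: "finite ?N" by simp
  have step1: "coeff (signof p * (\<Prod>i\<in>?N. [:A i (p i):] - (if i = p i then ?X else 0))) k =
     (\<Sum>S\<in>Pow ?N. if (\<forall>i\<in>S. p i = i) \<and> card S = k then (-1)^k * (signof p * (\<Prod>i\<in>?N - S. A i (p i))) else 0)"
    for p
  proof -
    have "(\<Prod>i\<in>?N. [:A i (p i):] - (if i = p i then ?X else 0)) = (\<Prod>i\<in>?N. (- (if p i = i then ?X else 0)) + [:A i (p i):])"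
      by (intro prod.cong) auto
    also have "\<dots> = (\<Sum>S\<in>Pow ?N. (\<Prod>i\<in>S. - (if p i = i then ?X else 0)) * (\<Prod>i\<in>?N - S. [:A i (p i):]))"
      by (rule prod_add[OF fN])
    also have "\<dots> = (\<Sum>S\<in>Pow ?N. (if \<forall>i\<in>S. p i = i then (- ?X) ^ card S else 0) * [:\<Prod>i\<in>?N - S. A i (p i):])"
      by (intro sum.cong refl) (simp add: prod_fix finite_subset prod_to_poly)
    finally have e: "(\<Prod>i\<in>?N. [:A i (p i):] - (if i = p i then ?X else 0)) = \<dots>" .
    have cS: "coeff ((if P then (- ?X) ^ j else 0) * [:c:]) k = (if P \<and> j = k then (-1)^k * c else 0)" for P j c
      using coeff_mX[of j c k] by (cases P) auto
    show ?thesis unfolding coeff_signof e coeff_sum cS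
      by (auto simp: sum_distrib_left intro!: sum.cong)
  qed
  have "coeff (det (mat n n (\<lambda>(i,j). [:A i j:] - (if i = j then ?X else 0)))) k =
     (\<Sum>p\<in>{p. p permutes ?N}. \<Sum>S\<in>Pow ?N. if (\<forall>i\<in>S. p i = i) \<and> card S = k then (-1)^k * (signof p * (\<Prod>i\<in>?N - S. A i (p i))) else 0)"
    unfolding det_mat_leibniz coeff_sum step1 ..
  also have "\<dots> = (\<Sum>S\<in>Pow ?N. \<Sum>p\<in>{p. p permutes ?N}. if (\<forall>i\<in>S. p i = i) \<and> card S = k then (-1)^k * (signof p * (\<Prod>i\<in>?N - S. A i (p i))) else 0)"
    by (rule sum.swap)
  also have "\<dots> = (\<Sum>S\<in>Pow ?N. if card S = k then (-1)^k * pdet A (?N - S) else 0)"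
  proof (intro sum.cong refl)
    fix S assume S: "S \<in> Pow ?N"
    have fP: "finite {p. p permutes ?N}" by (simp add: finite_permutations)
    have "(\<Sum>p\<in>{p. p permutes ?N}. if (\<forall>i\<in>S. p i = i) then signof p * (\<Prod>i\<in>?N - S. A i (p i)) else 0)
        = (\<Sum>p\<in>{p \<in> {p. p permutes ?N}. (\<forall>i\<in>S. p i = i)}. signof p * (\<Prod>i\<in>?N - S. A i (p i)))"
      by (rule sum.inter_filter[OF fP, symmetric])
    also have "{p \<in> {p. p permutes ?N}. (\<forall>i\<in>S. p i = i)} = {p. p permutes (?N - S)}"
      using permutes_fix_iff[of S ?N] S by auto
    finally have "(\<Sum>p\<in>{p. p permutes ?N}. if (\<forall>i\<in>S. p i = i) then signof p * (\<Prod>i\<in>?N - S. A i (p i)) else 0) = pdet A (?N - S)"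
      unfolding pdet_def .
    note eq = this
    show "(\<Sum>p\<in>{p. p permutes ?N}. if (\<forall>i\<in>S. p i = i) \<and> card S = k then (-1)^k * (signof p * (\<Prod>i\<in>?N - S. A i (p i))) else 0)
       = (if card S = k then (-1)^k * pdet A (?N - S) else 0)"
    proof (cases "card S = k")
      case True
      have "(\<Sum>p\<in>{p. p permutes ?N}. if (\<forall>i\<in>S. p i = i) \<and> card S = k then (-1)^k * (signof p * (\<Prod>i\<in>?N - S. A i (p i))) else 0)
         = (-1)^k * (\<Sum>p\<in>{p. p permutes ?N}. if (\<forall>i\<in>S. p i = i) then signof p * (\<Prod>i\<in>?N - S. A i (p i)) else 0)"
        unfolding sum_distrib_left using True by (intro sum.cong) auto
      with eq True show ?thesis by simp
    qed simp
  qed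
  also have "\<dots> = (-1)^k * (\<Sum>S | S \<subseteq> ?N \<and> card S = k. pdet A (?N - S))"
  proof -
    have "(\<Sum>S\<in>Pow ?N. if card S = k then (-1)^k * pdet A (?N - S) else 0) = (\<Sum>S\<in>{S\<in>Pow ?N. card S = k}. (-1)^k * pdet A (?N - S))"
      by (rule sum.inter_filter[symmetric]) simp
    also have "{S\<in>Pow ?N. card S = k} = {S. S \<subseteq> ?N \<and> card S = k}" by auto
    finally show ?thesis by (simp add: sum_distrib_left)
  qed
  also have "(\<Sum>S | S \<subseteq> ?N \<and> card S = k. pdet A (?N - S)) = (\<Sum>I | I \<subseteq> ?N \<and> card I = n - k. pdet A I)"
  proof (rule sum.reindex_bij_witness[where i = "\<lambda>I. ?N - I" and j = "\<lambda>S. ?N - S"])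
    fix S assume "S \<in> {S. S \<subseteq> ?N \<and> card S = k}"
    then show "?N - S \<in> {I. I \<subseteq> ?N \<and> card I = n - k}" "?N - (?N - S) = S" "pdet A (?N - S) = pdet A (?N - S)"
      by (auto simp: card_Diff_subset finite_subset)
  next
    fix I assume I: "I \<in> {I. I \<subseteq> ?N \<and> card I = n - k}"
    then have "card (?N - I) = k" using k by (auto simp: card_Diff_subset finite_subset)
    then show "?N - I \<in> {S. S \<subseteq> ?N \<and> card S = k}" "?N - (?N - I) = I" using I by auto
  qed
  finally show ?thesis .
qed

definition conjp :: "(nat \<Rightarrow> nat) \<Rightarrow> nat \<Rightarrow> nat set \<Rightarrow> (nat \<Rightarrow> nat) \<Rightarrow> nat \<Rightarrow> nat" where
  "conjp e m I q = (\<lambda>i. if i \<in> I then e (q (inv_into {0..<m} e i)) else i)"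

lemma conjp_permutes:
  assumes e: "bij_betw e {0..<m} I" and q: "q permutes {0..<m}"
  shows "conjp e m I q permutes I"
proof (rule bij_imp_permutes)
  have "bij_betw (e \<circ> q \<circ> inv_into {0..<m} e) I I"
    by (meson bij_betw_inv_into bij_betw_trans e permutes_imp_bij q)
  then show "bij_betw (conjp e m I q) I I"
    using bij_betw_cong[of I "conjp e m I q" "e \<circ> q \<circ> inv_into {0..<m} e" I] by (simp add: conjp_def)
next
  fix x assume "x \<notin> I" then show "conjp e m I q x = x" by (simp add: conjp_def)
qed

lemma e_transpose:
  assumes "inj_on e A" "a \<in> A" "b \<in> A" "r \<in> A"
  shows "e (Transposition.transpose a b r) = Transposition.transpose (e a) (e b) (e r)"
  using assms by (auto simp: Transposition.transpose_def inj_on_eq_iff)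

lemma conjp_sign:
  assumes e: "bij_betw e {0..<m} I" and q: "q permutes {0..<m}"
  shows "sign (conjp e m I q) = sign q"
  using q finite_atLeastLessThan
proof (induction q rule: permutes_induct)
  case id
  have "conjp e m I (\<lambda>a. a) = id"
    using e by (auto simp: conjp_def fun_eq_iff bij_betw_inv_into_right)
  then show ?case by simp
next
  case (swap a b p)
  have pperm: "p permutes {0..<m}" using swap by blast
  have IH: "sign (conjp e m I p) = sign p" using swap by blast
  have fI: "finite I" using e bij_betw_finite by blast
  have inj: "inj_on e {0..<m}" using e by (simp add: bij_betw_def)
  have eq: "conjp e m I (Transposition.transpose a b \<circ> p) = Transposition.transpose (e a) (e b) \<circ> conjp e m I p"
  proof
    fix i show "conjp e m I (Transposition.transpose a b \<circ> p) i = (Transposition.transpose (e a) (e b) \<circ> conjp e m I p) i"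
    proof (cases "i \<in> I")
      case True
      let ?r = "p (inv_into {0..<m} e i)"
      have "inv_into {0..<m} e i \<in> {0..<m}" using True e by (meson bij_betwE bij_betw_inv_into)
      then have r: "?r \<in> {0..<m}" using pperm by (simp add: permutes_in_image)
      have "e (Transposition.transpose a b ?r) = Transposition.transpose (e a) (e b) (e ?r)"
        using e_transpose[OF inj swap(1,2) r] .
      then show ?thesis using True by (simp add: conjp_def)
    next
      case False
      have "e a \<in> I" "e b \<in> I" using e swap(1,2) by (auto dest: bij_betwE)
      then show ?thesis using False by (auto simp: conjp_def Transposition.transpose_def)
    qed
  qed
  have pc: "permutation (conjp e m I p)"
    using conjp_permutes[OF e pperm] fI permutes_imp_permutation by blast
  have pp: "permutation p" using pperm permutes_imp_permutation by blast
  have ea: "e a \<noteq> e b" using inj swap(1,2,3) by (auto simp: inj_on_eq_iff)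
  have s1: "sign (Transposition.transpose (e a) (e b) \<circ> conjp e m I p) = - sign (conjp e m I p)"
    using sign_compose[OF permutation_swap_id pc, of "e a" "e b"] ea by (simp add: sign_swap_id)
  have s2: "sign (Transposition.transpose a b \<circ> p) = - sign p"
    using sign_compose[OF permutation_swap_id pp, of a b] swap(3) by (simp add: sign_swap_id)
  show ?case unfolding eq s1 s2 IH ..
qed

lemma pdet_det:
  assumes e: "bij_betw e {0..<m} I"
  shows "pdet f I = det (mat m m (\<lambda>(r,s). f (e r) (e s)))"
proof -
  let ?inv = "inv_into {0..<m} e"
  define \<psi> where "\<psi> = (\<lambda>p r. if r < m then ?inv (p (e r)) else r)"
  have ie: "bij_betw ?inv I {0..<m}" using e by (rule bij_betw_inv_into)
  have "det (mat m m (\<lambda>(r,s). f (e r) (e s))) = (\<Sum>q\<in>{q. q permutes {0..<m}}. signof q * (\<Prod>r=0..<m. f (e r) (e (q r))))"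
    by (rule det_mat_leibniz)
  also have "\<dots> = pdet f I" unfolding pdet_def
  proof (rule sum.reindex_bij_witness[where j = "conjp e m I" and i = \<psi>])
    fix q assume q: "q \<in> {q. q permutes {0..<m}}"
    then have q': "q permutes {0..<m}" by simp
    show "\<psi> (conjp e m I q) = q"
    proof
      fix r show "\<psi> (conjp e m I q) r = q r"
      proof (cases "r < m")
        case True
        then have "q r \<in> {0..<m}" using q' by (simp add: permutes_in_image)
        then show ?thesis using True e
          by (simp add: \<psi>_def conjp_def bij_betw_inv_into_left bij_betwE[OF e])
      next
        case False then show ?thesis using q' permutes_not_in[OF q'] by (simp add: \<psi>_def)
      qed
    qed
    show "conjp e m I q \<in> {p. p permutes I}" using conjp_permutes[OF e q'] by simp
    have "(\<Prod>i\<in>I. f i (conjp e m I q i)) = (\<Prod>r\<in>{0..<m}. f (e r) (conjp e m I q (e r)))"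
      using prod.reindex_bij_betw[OF e, of "\<lambda>i. f i (conjp e m I q i)"] by simp
    also have "\<dots> = (\<Prod>r=0..<m. f (e r) (e (q r)))"
      by (intro prod.cong refl) (simp add: conjp_def bij_betwE[OF e] bij_betw_inv_into_left[OF e])
    finally show "signof (conjp e m I q) * (\<Prod>i\<in>I. f i (conjp e m I q i)) = signof q * (\<Prod>r=0..<m. f (e r) (e (q r)))"
      using conjp_sign[OF e q'] by simp
  next
    fix p assume p: "p \<in> {p. p permutes I}"
    then have p': "p permutes I" by simp
    show "conjp e m I (\<psi> p) = p"
    proof
      fix i show "conjp e m I (\<psi> p) i = p i"
      proof (cases "i \<in> I")
        case True
        have a: "?inv i \<in> {0..<m}" using ie True by (meson bij_betwE)
        have "p i \<in> I" using p' True by (simp add: permutes_in_image)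
        then show ?thesis using True a
          by (simp add: \<psi>_def conjp_def bij_betw_inv_into_right[OF e])
      next
        case False then show ?thesis using permutes_not_in[OF p'] by (simp add: conjp_def)
      qed
    qed
    show "\<psi> p \<in> {q. q permutes {0..<m}}"
    proof -
      have "bij_betw (?inv \<circ> p \<circ> e) {0..<m} {0..<m}"
        by (meson bij_betw_trans e ie permutes_imp_bij p')
      then have "bij_betw (\<psi> p) {0..<m} {0..<m}"
        using bij_betw_cong[of "{0..<m}" "\<psi> p" "?inv \<circ> p \<circ> e" "{0..<m}"] by (simp add: \<psi>_def)
      then have "\<psi> p permutes {0..<m}"
        by (rule bij_imp_permutes) (simp add: \<psi>_def)
      then show ?thesis by simp
    qed
  qed
  finally show ?thesis ..
qed


definition Pairs :: "nat set \<Rightarrow> (nat \<times> nat) set" where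
  "Pairs S = {(p,q). p \<in> S \<and> q \<in> S \<and> p < q}"

definition VS :: "(nat \<Rightarrow> real) \<Rightarrow> nat set \<Rightarrow> real" where
  "VS x S = (\<Prod>(p,q)\<in>Pairs S. x q - x p)"

lemma finite_Pairs: "finite S \<Longrightarrow> finite (Pairs S)"
  unfolding Pairs_def by (rule finite_subset[of _ "S \<times> S"]) auto

lemma prod_neg_swap:
  "(\<Prod>q\<in>B. (x q - x i :: real)) = (-1) ^ card B * (\<Prod>q\<in>B. x i - x q)"
proof -
  have "(\<Prod>q\<in>B. (x q - x i :: real)) = (\<Prod>q\<in>B. (-1) * (x i - x q))" by (intro prod.cong) auto
  also have "\<dots> = (-1) ^ card B * (\<Prod>q\<in>B. x i - x q)" by (simp only: prod.distrib prod_constant)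
  finally show ?thesis .
qed

lemma VS_remove:
  assumes fS: "finite S" and iS: "i \<in> S"
  shows "VS x S = VS x (S - {i}) * (-1) ^ card {q\<in>S. i < q} * (\<Prod>p\<in>S - {i}. x i - x p)"
proof -
  let ?L = "{p\<in>S. p < i}" and ?R = "{q\<in>S. i < q}"
  have split: "Pairs S = Pairs (S - {i}) \<union> ((\<lambda>p. (p,i)) ` ?L \<union> (\<lambda>q. (i,q)) ` ?R)"
    using iS unfolding Pairs_def by auto
  have f1: "finite (Pairs (S - {i}))" using fS finite_Pairs by auto
  have f2: "finite ((\<lambda>p. (p,i)) ` ?L \<union> (\<lambda>q. (i,q)) ` ?R)" using fS by auto
  have d1: "Pairs (S - {i}) \<inter> ((\<lambda>p. (p,i)) ` ?L \<union> (\<lambda>q. (i,q)) ` ?R) = {}"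
    unfolding Pairs_def by auto
  have d2: "(\<lambda>p. (p,i)) ` ?L \<inter> (\<lambda>q. (i,q)) ` ?R = {}" by auto
  have "VS x S = VS x (S - {i}) * ((\<Prod>(p,q)\<in>(\<lambda>p. (p,i)) ` ?L. x q - x p) * (\<Prod>(p,q)\<in>(\<lambda>q. (i,q)) ` ?R. x q - x p))"
    unfolding VS_def split prod.union_disjoint[OF f1 f2 d1]
    by (subst prod.union_disjoint) (use fS d2 in auto)
  also have "(\<Prod>(p,q)\<in>(\<lambda>p. (p,i)) ` ?L. x q - x p) = (\<Prod>p\<in>?L. x i - x p)"
    by (subst prod.reindex) (auto simp: inj_on_def)
  also have "(\<Prod>(p,q)\<in>(\<lambda>q. (i,q)) ` ?R. x q - x p) = (\<Prod>q\<in>?R. x q - x i)"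
    by (subst prod.reindex) (auto simp: inj_on_def)
  also have "\<dots> = (-1) ^ card ?R * (\<Prod>q\<in>?R. x i - x q)" by (rule prod_neg_swap)
  also have "(\<Prod>p\<in>?L. x i - x p) * ((-1) ^ card ?R * (\<Prod>q\<in>?R. x i - x q)) = (-1) ^ card ?R * (\<Prod>p\<in>S - {i}. x i - x p)"
  proof -
    have "S - {i} = ?L \<union> ?R" by auto
    moreover have "(\<Prod>p\<in>?L \<union> ?R. x i - x p) = (\<Prod>p\<in>?L. x i - x p) * (\<Prod>q\<in>?R. x i - x q)"
      by (rule prod.union_disjoint) (use fS in auto)
    ultimately have "(\<Prod>p\<in>S - {i}. x i - x p) = (\<Prod>p\<in>?L. x i - x p) * (\<Prod>q\<in>?R. x i - x q)"
      by simp
    then show ?thesis by simp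
  qed
  finally show ?thesis by simp
qed

lemma Vs_VS:
  fixes x :: "nat \<Rightarrow> real"
  assumes bij: "bij_betw g {0..<k} R" and mono: "\<And>a b. a < b \<Longrightarrow> b < k \<Longrightarrow> g a < g b"
  shows "Vs (\<lambda>a. x (g a)) k = VS x R"
proof -
  let ?inv = "inv_into {0..<k} g"
  have mono': "a < k \<Longrightarrow> b < k \<Longrightarrow> g a < g b \<Longrightarrow> a < b" for a b
    using mono[of b a] by (cases "a < b") (auto simp: not_less le_less)
  have "Vs (\<lambda>a. x (g a)) k = (\<Prod>(b,a)\<in>Sigma {..<k} (\<lambda>b. {..<b}). x (g b) - x (g a))"
    unfolding Vs_def by (rule prod.Sigma) auto
  also have "\<dots> = VS x R" unfolding VS_def
  proof (rule prod.reindex_bij_witness[where i = "\<lambda>(p,q). (?inv q, ?inv p)" and j = "\<lambda>(b,a). (g a, g b)"])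
    fix ba assume "ba \<in> Sigma {..<k} (\<lambda>b. {..<b})"
    then obtain b a where ba: "ba = (b,a)" "b < k" "a < b" by auto
    then show "(\<lambda>(p,q). (?inv q, ?inv p)) ((\<lambda>(b,a). (g a, g b)) ba) = ba"
      using bij by (simp add: bij_betw_inv_into_left)
    show "(\<lambda>(b,a). (g a, g b)) ba \<in> Pairs R"
      using ba bij mono[of a b] unfolding Pairs_def by (auto dest: bij_betwE)
    show "(case (\<lambda>(b,a). (g a, g b)) ba of (p,q) \<Rightarrow> x q - x p) = (case ba of (b,a) \<Rightarrow> x (g b) - x (g a))"
      using ba by simp
  next
    fix pq assume "pq \<in> Pairs R"
    then obtain p q where pq: "pq = (p,q)" "p \<in> R" "q \<in> R" "p < q" unfolding Pairs_def by auto
    have ie: "bij_betw ?inv R {0..<k}" using bij by (rule bij_betw_inv_into)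
    have ip: "?inv p < k" and iq: "?inv q < k" using ie pq by (auto dest: bij_betwE)
    have gp: "g (?inv p) = p" and gq: "g (?inv q) = q" using bij pq by (auto simp: bij_betw_inv_into_right)
    show "(\<lambda>(b,a). (g a, g b)) ((\<lambda>(p,q). (?inv q, ?inv p)) pq) = pq"
      using pq gp gq by simp
    show "(\<lambda>(p,q). (?inv q, ?inv p)) pq \<in> Sigma {..<k} (\<lambda>b. {..<b})"
      using pq ip iq mono'[of "?inv p" "?inv q"] gp gq by auto
  qed
  finally show ?thesis .
qed

definition enum :: "nat set \<Rightarrow> nat \<Rightarrow> nat" where
  "enum I r = sorted_list_of_set I ! r"

lemma enum_bij: "finite I \<Longrightarrow> bij_betw (enum I) {0..<card I} I"
  unfolding enum_def by (rule bij_betw_nth) (auto simp: atLeast0LessThan)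

lemma enum_mono: "finite I \<Longrightarrow> r < s \<Longrightarrow> s < card I \<Longrightarrow> enum I r < enum I s"
  unfolding enum_def using sorted_wrt_nth_less[OF strict_sorted_list_of_set, of r s I] by simp

lemma enum_mono_iff: "finite I \<Longrightarrow> r < card I \<Longrightarrow> s < card I \<Longrightarrow> enum I r < enum I s \<longleftrightarrow> r < s"
  using enum_mono[of I r s] enum_mono[of I s r] by (cases "r < s") (auto simp: not_less le_less)

lemma enum_card_gt:
  assumes fI: "finite I" and r: "r < card I"
  shows "card {q\<in>I. enum I r < q} = card I - 1 - r"
proof -
  have eb: "bij_betw (enum I) {0..<card I} I" using fI by (rule enum_bij)
  have "{q\<in>I. enum I r < q} = enum I ` {r<..<card I}"
  proof
    show "{q\<in>I. enum I r < q} \<subseteq> enum I ` {r<..<card I}"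
    proof
      fix q assume q: "q \<in> {q\<in>I. enum I r < q}"
      have "q \<in> enum I ` {0..<card I}" using eb q by (simp add: bij_betw_def)
      then obtain s where s: "s < card I" "q = enum I s" by auto
      then have "r < s" using q enum_mono_iff[OF fI r s(1)] by auto
      then show "q \<in> enum I ` {r<..<card I}" using s by auto
    qed
    show "enum I ` {r<..<card I} \<subseteq> {q\<in>I. enum I r < q}"
      using eb enum_mono[OF fI] by (auto dest: bij_betwE)
  qed
  moreover have "inj_on (enum I) {r<..<card I}"
    using eb by (rule inj_on_subset[OF bij_betw_imp_inj_on]) auto
  ultimately show ?thesis by (simp add: card_image)
qed

lemma insert_index_lt: "r < m \<Longrightarrow> a < m - 1 \<Longrightarrow> insert_index r a < m"
  by (auto simp: insert_index_def)

lemma sub_bij: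
  assumes fI: "finite I" and r: "r < card I"
  shows "bij_betw (\<lambda>a. enum I (insert_index r a)) {0..<card I - 1} (I - {enum I r})"
proof -
  have eb: "bij_betw (enum I) {0..<card I} I" using fI by (rule enum_bij)
  have b1: "bij_betw (insert_index r) {0..<card I - 1} ({0..<card I} - {r})"
  proof -
    have "insert_index r ` {0..<card I - 1} = {0..<Suc (card I - 1)} - {r}"
      by (rule insert_index_image) (use r in auto)
    moreover have "Suc (card I - 1) = card I" using r by auto
    moreover have "inj_on (insert_index r) {0..<card I - 1}"
      by (auto simp: inj_on_def insert_index_def split: if_splits)
    ultimately show ?thesis by (simp add: bij_betw_def)
  qed
  have b2: "bij_betw (enum I) ({0..<card I} - {r}) (I - {enum I r})"
    by (rule bij_betw_DiffI[OF eb]) (use r eb in \<open>auto dest: bij_betwE\<close>)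
  show ?thesis using bij_betw_trans[OF b1 b2] by (simp add: comp_def)
qed

lemma sub_mono:
  assumes fI: "finite I" and r: "r < card I" and ab: "a < b" "b < card I - 1"
  shows "enum I (insert_index r a) < enum I (insert_index r b)"
  by (rule enum_mono[OF fI]) (use r ab in \<open>auto simp: insert_index_def\<close>)

lemma cof_cauchy:
  fixes y :: "nat \<Rightarrow> real"
  assumes nz: "\<And>i j. i < m \<Longrightarrow> j < m \<Longrightarrow> y i + y j \<noteq> 0" and r: "r < m" and s: "s < m"
  shows "cofactor (mat m m (\<lambda>(i,j). 1 / (y i + y j))) r s = (-1)^(r+s) *
    (Vs (\<lambda>a. y (insert_index r a)) (m-1) * Vs (\<lambda>a. y (insert_index s a)) (m-1) /
     (\<Prod>a<m-1. \<Prod>b<m-1. y (insert_index r a) + y (insert_index s b)))"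
proof -
  have "mat_delete (mat m m (\<lambda>(i,j). 1 / (y i + y j))) r s = mat (m-1) (m-1) (\<lambda>(a,b). 1 / (y (insert_index r a) + y (insert_index s b)))"
    by (rule eq_matI) (use r s in \<open>auto simp: mat_delete_def insert_index_def\<close>)
  moreover have "det (mat (m-1) (m-1) (\<lambda>(a,b). 1 / (y (insert_index r a) + y (insert_index s b)))) =
    Vs (\<lambda>a. y (insert_index r a)) (m-1) * Vs (\<lambda>a. y (insert_index s a)) (m-1) /
     (\<Prod>a<m-1. \<Prod>b<m-1. y (insert_index r a) + y (insert_index s b))"
    by (rule cauchy_det) (use nz insert_index_lt r s in auto)
  ultimately show ?thesis by (simp add: cofactor_def)
qed

definition PP :: "(nat \<Rightarrow> real) \<Rightarrow> nat set \<Rightarrow> nat set \<Rightarrow> real" where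
  "PP x A B = (\<Prod>p\<in>A. \<Prod>q\<in>B. x p + x q)"

definition Pd :: "(nat \<Rightarrow> real) \<Rightarrow> nat set \<Rightarrow> nat \<Rightarrow> real" where
  "Pd x S i = (\<Prod>p\<in>S - {i}. x i - x p)"

lemma sign_split:
  assumes "r < m"
  shows "(-1::real) ^ (m - 1 - r) = (-1) ^ (m - 1) * (-1) ^ r"
proof -
  have "(-1::real) ^ (m - 1 - r) * (-1) ^ r = (-1) ^ (m - 1)"
    using assms by (simp add: power_add[symmetric])
  then have "(-1::real) ^ (m - 1 - r) * (-1) ^ r * (-1) ^ r = (-1) ^ (m - 1) * (-1) ^ r" by simp
  moreover have "(-1::real) ^ r * (-1) ^ r = 1" by (simp add: power_add[symmetric])
  ultimately show ?thesis by (simp add: mult.assoc)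
qed

lemma sign_cancel:
  assumes "r < m" "s < m"
  shows "(-1::real) ^ (m - 1 - r) * (-1) ^ (m - 1 - s) = (-1) ^ (r + s)"
proof -
  have h: "((-1::real) ^ (m - 1)) * ((-1) ^ (m - 1)) = 1" by (simp add: power_add[symmetric])
  have "(-1::real) ^ (m - 1 - r) * (-1) ^ (m - 1 - s) = ((-1) ^ (m - 1) * (-1) ^ (m - 1)) * ((-1) ^ r * (-1) ^ s)"
    unfolding sign_split[OF assms(1)] sign_split[OF assms(2)] by (simp only: mult_ac)
  then show ?thesis unfolding h by (simp add: power_add)
qed

lemma VS_remove_enum:
  fixes x :: "nat \<Rightarrow> real"
  assumes fI: "finite I" and r: "r < card I"
  shows "VS x I = VS x (I - {enum I r}) * (-1) ^ (card I - 1 - r) * Pd x I (enum I r)"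
proof -
  have "enum I r \<in> I" using enum_bij[OF fI] r by (auto dest: bij_betwE)
  then show ?thesis using VS_remove[OF fI, of "enum I r" x] enum_card_gt[OF fI r] by (simp add: Pd_def)
qed

lemma Vs_sub:
  fixes x :: "nat \<Rightarrow> real"
  assumes fI: "finite I" and r: "r < card I"
  shows "Vs (\<lambda>a. x (enum I (insert_index r a))) (card I - 1) = VS x (I - {enum I r})"
  by (rule Vs_VS[OF sub_bij[OF fI r]]) (rule sub_mono[OF fI r])

lemma PP_sub:
  fixes x :: "nat \<Rightarrow> real"
  assumes fI: "finite I" and r: "r < card I" and s: "s < card I"
  shows "(\<Prod>a<card I - 1. \<Prod>b<card I - 1. x (enum I (insert_index r a)) + x (enum I (insert_index s b)))
     = PP x (I - {enum I r}) (I - {enum I s})"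
proof -
  have "(\<Prod>a<card I - 1. \<Prod>b<card I - 1. x (enum I (insert_index r a)) + x (enum I (insert_index s b)))
     = (\<Prod>a\<in>{0..<card I - 1}. \<Prod>q\<in>I - {enum I s}. x (enum I (insert_index r a)) + x q)"
  proof -
    have "(\<Prod>b\<in>{0..<card I - 1}. x (enum I (insert_index r a)) + x (enum I (insert_index s b))) = (\<Prod>q\<in>I - {enum I s}. x (enum I (insert_index r a)) + x q)" for a
      by (rule prod.reindex_bij_betw[OF sub_bij[OF fI s], of "\<lambda>q. x (enum I (insert_index r a)) + x q"])
    then show ?thesis unfolding atLeast0LessThan[symmetric] by simp
  qed
  also have "\<dots> = PP x (I - {enum I r}) (I - {enum I s})"
    unfolding PP_def by (rule prod.reindex_bij_betw[OF sub_bij[OF fI r], of "\<lambda>p. \<Prod>q\<in>I - {enum I s}. x p + x q"])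
  finally show ?thesis .
qed

lemma cof_set:
  fixes x :: "nat \<Rightarrow> real"
  assumes fI: "finite I" and pos: "\<And>p. p \<in> I \<Longrightarrow> x p > 0" and inj: "inj_on x I"
    and r: "r < card I" and s: "s < card I"
  shows "cofactor (mat (card I) (card I) (\<lambda>(a,b). 1 / (x (enum I a) + x (enum I b)))) r s
     = VS x I ^ 2 / (Pd x I (enum I r) * Pd x I (enum I s) * PP x (I - {enum I r}) (I - {enum I s}))"
proof -
  let ?m = "card I"
  have eb: "bij_betw (enum I) {0..<card I} I" using fI by (rule enum_bij)
  have nz: "x (enum I i) + x (enum I j) \<noteq> 0" if "i < ?m" "j < ?m" for i j
  proof -
    have "enum I i \<in> I" "enum I j \<in> I" using eb that by (auto dest: bij_betwE)
    then show ?thesis using pos by (smt (verit))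
  qed
  have c: "cofactor (mat ?m ?m (\<lambda>(a,b). 1 / (x (enum I a) + x (enum I b)))) r s = (-1)^(r+s) *
    (VS x (I - {enum I r}) * VS x (I - {enum I s}) / PP x (I - {enum I r}) (I - {enum I s}))"
    using cof_cauchy[of ?m "\<lambda>a. x (enum I a)" r s] nz r s
    unfolding Vs_sub[OF fI r] Vs_sub[OF fI s] PP_sub[OF fI r s] by simp
  have Pdnz: "Pd x I i \<noteq> 0" if "i \<in> I" for i
    unfolding Pd_def using inj that by (auto simp: prod_zero_iff fI inj_on_eq_iff)
  have ri: "enum I r \<in> I" and si: "enum I s \<in> I" using eb r s by (auto dest: bij_betwE)
  have v1: "VS x I = VS x (I - {enum I r}) * (-1) ^ (?m - 1 - r) * Pd x I (enum I r)" by (rule VS_remove_enum[OF fI r])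
  have v2: "VS x I = VS x (I - {enum I s}) * (-1) ^ (?m - 1 - s) * Pd x I (enum I s)" by (rule VS_remove_enum[OF fI s])
  have sc: "(-1::real) ^ (?m - 1 - r) * (-1) ^ (?m - 1 - s) = (-1) ^ (r + s)" by (rule sign_cancel[OF r s])
  have "VS x I ^ 2 = VS x (I - {enum I r}) * VS x (I - {enum I s}) * ((-1) ^ (?m - 1 - r) * (-1) ^ (?m - 1 - s)) * (Pd x I (enum I r) * Pd x I (enum I s))"
    unfolding power2_eq_square by (subst (1) v1, subst v2) (simp add: algebra_simps)
  then have "VS x I ^ 2 = VS x (I - {enum I r}) * VS x (I - {enum I s}) * (-1) ^ (r + s) * (Pd x I (enum I r) * Pd x I (enum I s))"
    unfolding sc .
  then show ?thesis unfolding c using Pdnz[OF ri] Pdnz[OF si] by (simp add: field_simps)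
qed

lemma pdet_cong:
  assumes "\<And>i j. i \<in> I \<Longrightarrow> j \<in> I \<Longrightarrow> f i j = g i j"
  shows "pdet f I = pdet g I"
  unfolding pdet_def
  by (intro sum.cong refl arg_cong2[where f = "(*)"] prod.cong) (auto simp: assms permutes_in_image)

lemma pdet_scale:
  fixes f :: "nat \<Rightarrow> nat \<Rightarrow> 'a::comm_ring_1"
  shows "pdet (\<lambda>i j. s * f i j) I = s ^ card I * pdet f I"
  unfolding pdet_def by (simp add: prod.distrib sum_distrib_left algebra_simps)

lemma det_M_set:
  fixes x u :: "nat \<Rightarrow> real"
  assumes fI: "finite I" and pos: "\<And>p. p \<in> I \<Longrightarrow> x p > 0" and inj: "inj_on x I"
  shows "pdet (\<lambda>i j. 1 / (x i + x j) + \<beta> * u i * u j) I = VS x I ^ 2 / PP x I I +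
     \<beta> * (\<Sum>i\<in>I. \<Sum>j\<in>I. u i * u j * (VS x I ^ 2 / (Pd x I i * Pd x I j * PP x (I - {i}) (I - {j}))))"
proof -
  let ?m = "card I" and ?e = "enum I"
  have eb: "bij_betw ?e {0..<?m} I" using fI by (rule enum_bij)
  have nz: "x (?e i) + x (?e j) \<noteq> 0" if "i < ?m" "j < ?m" for i j
  proof -
    have "?e i \<in> I" "?e j \<in> I" using eb that by (auto dest: bij_betwE)
    then show ?thesis using pos by (smt (verit))
  qed
  have "pdet (\<lambda>i j. 1 / (x i + x j) + \<beta> * u i * u j) I = det (mat ?m ?m (\<lambda>(r,s). 1 / (x (?e r) + x (?e s)) + \<beta> * u (?e r) * u (?e s)))"
    by (rule pdet_det[OF eb])
  also have "\<dots> = det (mat ?m ?m (\<lambda>(r,s). 1 / (x (?e r) + x (?e s)))) +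
     \<beta> * (\<Sum>r<?m. \<Sum>s<?m. u (?e r) * u (?e s) * cofactor (mat ?m ?m (\<lambda>(r,s). 1 / (x (?e r) + x (?e s)))) r s)"
    by (rule det_rank_one)
  also have "det (mat ?m ?m (\<lambda>(r,s). 1 / (x (?e r) + x (?e s)))) = VS x I ^ 2 / PP x I I"
  proof -
    have "det (mat ?m ?m (\<lambda>(r,s). 1 / (x (?e r) + x (?e s)))) = Vs (\<lambda>r. x (?e r)) ?m * Vs (\<lambda>r. x (?e r)) ?m / (\<Prod>r<?m. \<Prod>s<?m. x (?e r) + x (?e s))"
      by (rule cauchy_det) (use nz in auto)
    also have "Vs (\<lambda>r. x (?e r)) ?m = VS x I"
      by (rule Vs_VS[OF eb]) (rule enum_mono[OF fI])
    also have "(\<Prod>r<?m. \<Prod>s<?m. x (?e r) + x (?e s)) = PP x I I"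
    proof -
      have "(\<Prod>r<?m. \<Prod>s<?m. x (?e r) + x (?e s)) = (\<Prod>r\<in>{0..<?m}. \<Prod>q\<in>I. x (?e r) + x q)"
      proof -
        have "(\<Prod>s\<in>{0..<?m}. x (?e r) + x (?e s)) = (\<Prod>q\<in>I. x (?e r) + x q)" for r
          by (rule prod.reindex_bij_betw[OF eb, of "\<lambda>q. x (?e r) + x q"])
        then show ?thesis unfolding atLeast0LessThan[symmetric] by simp
      qed
      also have "\<dots> = PP x I I"
        unfolding PP_def by (rule prod.reindex_bij_betw[OF eb, of "\<lambda>p. \<Prod>q\<in>I. x p + x q"])
      finally show ?thesis .
    qed
    finally show ?thesis by (simp add: power2_eq_square)
  qed
  also have "(\<Sum>r<?m. \<Sum>s<?m. u (?e r) * u (?e s) * cofactor (mat ?m ?m (\<lambda>(r,s). 1 / (x (?e r) + x (?e s)))) r s)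
     = (\<Sum>r<?m. \<Sum>s<?m. u (?e r) * u (?e s) * (VS x I ^ 2 / (Pd x I (?e r) * Pd x I (?e s) * PP x (I - {?e r}) (I - {?e s}))))"
    by (intro sum.cong refl) (simp add: cof_set[OF fI pos inj])
  also have "\<dots> = (\<Sum>i\<in>I. \<Sum>j\<in>I. u i * u j * (VS x I ^ 2 / (Pd x I i * Pd x I j * PP x (I - {i}) (I - {j}))))"
  proof -
    have "(\<Sum>r<?m. \<Sum>s<?m. u (?e r) * u (?e s) * (VS x I ^ 2 / (Pd x I (?e r) * Pd x I (?e s) * PP x (I - {?e r}) (I - {?e s}))))
      = (\<Sum>r\<in>{0..<?m}. \<Sum>j\<in>I. u (?e r) * u j * (VS x I ^ 2 / (Pd x I (?e r) * Pd x I j * PP x (I - {?e r}) (I - {j}))))"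
    proof -
      have "(\<Sum>s\<in>{0..<?m}. u (?e r) * u (?e s) * (VS x I ^ 2 / (Pd x I (?e r) * Pd x I (?e s) * PP x (I - {?e r}) (I - {?e s}))))
         = (\<Sum>j\<in>I. u (?e r) * u j * (VS x I ^ 2 / (Pd x I (?e r) * Pd x I j * PP x (I - {?e r}) (I - {j}))))" for r
        by (rule sum.reindex_bij_betw[OF eb, of "\<lambda>j. u (?e r) * u j * (VS x I ^ 2 / (Pd x I (?e r) * Pd x I j * PP x (I - {?e r}) (I - {j})))"])
      then show ?thesis unfolding atLeast0LessThan[symmetric] by simp
    qed
    also have "\<dots> = (\<Sum>i\<in>I. \<Sum>j\<in>I. u i * u j * (VS x I ^ 2 / (Pd x I i * Pd x I j * PP x (I - {i}) (I - {j}))))"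
      by (rule sum.reindex_bij_betw[OF eb, of "\<lambda>i. \<Sum>j\<in>I. u i * u j * (VS x I ^ 2 / (Pd x I i * Pd x I j * PP x (I - {i}) (I - {j})))"])
    finally show ?thesis .
  qed
  finally show ?thesis .
qed

lemma PP_decomp:
  fixes x :: "nat \<Rightarrow> real"
  assumes fI: "finite I" and i: "i \<in> I" and j: "j \<in> I"
  shows "PP x I I = PP x (I - {i}) (I - {j}) * (\<Prod>q\<in>I. x i + x q) * (\<Prod>p\<in>I - {i}. x p + x j)"
proof -
  have "PP x I I = (\<Prod>q\<in>I. x i + x q) * (\<Prod>p\<in>I - {i}. \<Prod>q\<in>I. x p + x q)"
    unfolding PP_def using prod.remove[OF fI i, of "\<lambda>p. \<Prod>q\<in>I. x p + x q"] by simp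
  also have "(\<Prod>p\<in>I - {i}. \<Prod>q\<in>I. x p + x q) = (\<Prod>p\<in>I - {i}. (x p + x j) * (\<Prod>q\<in>I - {j}. x p + x q))"
    by (intro prod.cong refl) (rule prod.remove[OF fI j])
  also have "\<dots> = (\<Prod>p\<in>I - {i}. x p + x j) * PP x (I - {i}) (I - {j})"
    unfolding PP_def by (rule prod.distrib)
  finally show ?thesis by simp
qed

lemma alg1:
  fixes V2 PPI PP' xj aj Sp Sm Pd2 K :: real
  assumes "PPI = PP' * (2 * xj) * Sp" "Pd2 = Sm" "Sp \<noteq> 0" "Sm \<noteq> 0" "xj \<noteq> 0" "aj \<noteq> 0" "PP' \<noteq> 0"
  shows "V2 / PPI * (K / aj * (4 * xj * Sp / (aj * Sm))) = 2 * K * (1 / aj * (1 / aj) * (V2 / (Pd2 * PP')))"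
  using assms by (simp add: field_simps)

lemma alg2:
  fixes V2 PPI PP' xi xj ai aj Qp Qm PdPd K S D2 :: real
  assumes "PPI = PP' * (4 * xi * xj * S * Qp)" "PdPd = - (D2 * Qm)"
    "Qp \<noteq> 0" "Qm \<noteq> 0" "xi \<noteq> 0" "xj \<noteq> 0" "S \<noteq> 0" "D2 \<noteq> 0" "ai \<noteq> 0" "aj \<noteq> 0" "PP' \<noteq> 0"
  shows "- (V2 / PPI * (K / aj * (8 * xi * xj * S * Qp / (ai * D2 * Qm))))
     = 2 * K * (1 / ai * (1 / aj) * (V2 / (PdPd * PP')))"
  using assms by (simp add: field_simps)

lemma PP_pos:
  fixes x :: "nat \<Rightarrow> real"
  assumes "finite I" "\<And>p. p \<in> I \<Longrightarrow> x p > 0" "A \<subseteq> I" "B \<subseteq> I"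
  shows "PP x A B > 0"
  unfolding PP_def using assms by (intro prod_pos) (auto intro!: prod_pos add_pos_pos)

lemma diag_term:
  fixes x a :: "nat \<Rightarrow> real"
  assumes fI: "finite I" and pos: "\<And>p. p \<in> I \<Longrightarrow> x p > 0" and inj: "inj_on x I"
    and apos: "\<And>p. p \<in> I \<Longrightarrow> a p > 0" and j: "j \<in> I"
  shows "VS x I ^ 2 / PP x I I * (K / a j * (4 * x j * (\<Prod>m\<in>I - {j}. (x m + x j)^2) / (a j * (\<Prod>m\<in>I - {j}. (x m - x j)^2))))
     = 2 * K * (1 / a j * (1 / a j) * (VS x I ^ 2 / (Pd x I j * Pd x I j * PP x (I - {j}) (I - {j}))))"
proof (rule alg1)
  have "(\<Prod>q\<in>I. x j + x q) = (x j + x j) * (\<Prod>q\<in>I - {j}. x j + x q)" by (rule prod.remove[OF fI j])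
  moreover have "(\<Prod>q\<in>I - {j}. x j + x q) * (\<Prod>p\<in>I - {j}. x p + x j) = (\<Prod>m\<in>I - {j}. (x m + x j)^2)"
    by (simp add: prod.distrib[symmetric] power2_eq_square add.commute)
  ultimately show "PP x I I = PP x (I - {j}) (I - {j}) * (2 * x j) * (\<Prod>m\<in>I - {j}. (x m + x j)^2)"
    using PP_decomp[OF fI j j, of x] by (simp add: algebra_simps)
  show "Pd x I j * Pd x I j = (\<Prod>m\<in>I - {j}. (x m - x j)^2)"
    unfolding Pd_def by (simp add: prod.distrib[symmetric] power2_eq_square algebra_simps)
  show "(\<Prod>m\<in>I - {j}. (x m + x j)^2) \<noteq> 0" using pos j by (auto simp: prod_zero_iff fI) (smt (verit) pos DiffD1)
  show "(\<Prod>m\<in>I - {j}. (x m - x j)^2) \<noteq> 0" using inj j by (auto simp: prod_zero_iff fI inj_on_eq_iff)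
  show "x j \<noteq> 0" using pos j by (smt (verit))
  show "a j \<noteq> 0" using apos j by (smt (verit))
  show "PP x (I - {j}) (I - {j}) \<noteq> 0" using PP_pos[where x = x and I = I and A = "I - {j}" and B = "I - {j}"] fI pos by auto
qed

lemma off_term:
  fixes x a :: "nat \<Rightarrow> real"
  assumes fI: "finite I" and pos: "\<And>p. p \<in> I \<Longrightarrow> x p > 0" and inj: "inj_on x I"
    and apos: "\<And>p. p \<in> I \<Longrightarrow> a p > 0" and i: "i \<in> I" and j: "j \<in> I" and ij: "i \<noteq> j"
  shows "- (VS x I ^ 2 / PP x I I * (K / a j * (8 * x i * x j * (x i + x j) * (\<Prod>l\<in>I - {i,j}. \<Prod>m\<in>{i,j}. (x m + x l))
            / (a i * (x j - x i)^2 * (\<Prod>l\<in>I - {i,j}. \<Prod>m\<in>{i,j}. (x m - x l))))))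
     = 2 * K * (1 / a i * (1 / a j) * (VS x I ^ 2 / (Pd x I i * Pd x I j * PP x (I - {i}) (I - {j}))))"
proof (rule alg2)
  have ji: "j \<in> I - {i}" using i j ij by auto
  have ij': "i \<in> I - {j}" using i j ij by auto
  have fIi: "finite (I - {i})" "finite (I - {j})" using fI by auto
  have D: "I - {i} - {j} = I - {i,j}" "I - {j} - {i} = I - {i,j}" by auto
  have qp: "(\<Prod>l\<in>I - {i,j}. \<Prod>m\<in>{i,j}. (x m + x l)) = (\<Prod>l\<in>I - {i,j}. x i + x l) * (\<Prod>l\<in>I - {i,j}. x l + x j)"
    using ij by (simp add: prod.distrib[symmetric] add.commute)
  have qm: "(\<Prod>l\<in>I - {i,j}. \<Prod>m\<in>{i,j}. (x m - x l)) = (\<Prod>l\<in>I - {i,j}. x i - x l) * (\<Prod>l\<in>I - {i,j}. x j - x l)"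
    using ij by (simp add: prod.distrib[symmetric])
  have p1: "(\<Prod>q\<in>I. x i + x q) = (x i + x i) * ((x i + x j) * (\<Prod>l\<in>I - {i,j}. x i + x l))"
    using prod.remove[OF fI i, of "\<lambda>q. x i + x q"] prod.remove[OF fIi(1) ji, of "\<lambda>q. x i + x q"] D by simp
  have p2: "(\<Prod>p\<in>I - {i}. x p + x j) = (x j + x j) * (\<Prod>l\<in>I - {i,j}. x l + x j)"
    using prod.remove[OF fIi(1) ji, of "\<lambda>p. x p + x j"] D by simp
  show "PP x I I = PP x (I - {i}) (I - {j}) * (4 * x i * x j * (x i + x j) * (\<Prod>l\<in>I - {i,j}. \<Prod>m\<in>{i,j}. (x m + x l)))"
    unfolding PP_decomp[OF fI i j, of x] p1 p2 qp by (simp add: algebra_simps)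
  have d1: "Pd x I i = (x i - x j) * (\<Prod>l\<in>I - {i,j}. x i - x l)"
    unfolding Pd_def using prod.remove[OF fIi(1) ji, of "\<lambda>p. x i - x p"] D by simp
  have d2: "Pd x I j = (x j - x i) * (\<Prod>l\<in>I - {i,j}. x j - x l)"
    unfolding Pd_def using prod.remove[OF fIi(2) ij', of "\<lambda>p. x j - x p"] D by simp
  show "Pd x I i * Pd x I j = - ((x j - x i)^2 * (\<Prod>l\<in>I - {i,j}. \<Prod>m\<in>{i,j}. (x m - x l)))"
    unfolding d1 d2 qm by (simp add: power2_eq_square algebra_simps)
  have xi: "x i > 0" and xj: "x j > 0" using pos i j by auto
  have neq: "x i \<noteq> x j" using inj i j ij by (auto simp: inj_on_eq_iff)
  show "(\<Prod>l\<in>I - {i,j}. \<Prod>m\<in>{i,j}. (x m + x l)) \<noteq> 0"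
    unfolding qp using pos xi xj fI by (auto simp: prod_zero_iff) (smt (verit) DiffD1 pos)+
  show "(\<Prod>l\<in>I - {i,j}. \<Prod>m\<in>{i,j}. (x m - x l)) \<noteq> 0"
    unfolding qm using inj i j fI by (auto simp: prod_zero_iff inj_on_eq_iff)
  show "x i \<noteq> 0" "x j \<noteq> 0" "x i + x j \<noteq> 0" using xi xj by auto
  show "(x j - x i)^2 \<noteq> 0" using neq by auto
  show "a i \<noteq> 0" "a j \<noteq> 0" using apos i j by (smt (verit))+
  show "PP x (I - {i}) (I - {j}) \<noteq> 0" using PP_pos[where x = x and I = I and A = "I - {i}" and B = "I - {j}"] fI pos by auto
qed

lemma DI_alg:
  fixes x a :: "nat \<Rightarrow> real"
  assumes fI: "finite I" and pos: "\<And>p. p \<in> I \<Longrightarrow> x p > 0" and inj: "inj_on x I"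
    and apos: "\<And>p. p \<in> I \<Longrightarrow> a p > 0"
  shows "(1 + (\<Sum>j\<in>I. K / a j *
        (4 * x j * (\<Prod>m\<in>I - {j}. (x m + x j)^2) / (a j * (\<Prod>m\<in>I - {j}. (x m - x j)^2))
         - (\<Sum>i\<in>I - {j}. 8 * x i * x j * (x i + x j) *
               (\<Prod>l\<in>I - {i,j}. \<Prod>m\<in>{i,j}. (x m + x l))
             / (a i * (x j - x i)^2 * (\<Prod>l\<in>I - {i,j}. \<Prod>m\<in>{i,j}. (x m - x l)))))))
     * (\<Prod>(i,j)\<in>{(i,j). i \<in> I \<and> j \<in> I \<and> i < j}. (x i - x j)^2)
     / (\<Prod>(i,j)\<in>I \<times> I. (x i + x j))
   = VS x I ^ 2 / PP x I I + (2 * K) * (\<Sum>i\<in>I. \<Sum>j\<in>I. 1 / a i * (1 / a j) * (VS x I ^ 2 / (Pd x I i * Pd x I j * PP x (I - {i}) (I - {j}))))"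
proof -
  define G where "G = (\<lambda>i j. 2 * K * (1 / a i * (1 / a j) * (VS x I ^ 2 / (Pd x I i * Pd x I j * PP x (I - {i}) (I - {j})))))"
  define T1 where "T1 = (\<lambda>j. 4 * x j * (\<Prod>m\<in>I - {j}. (x m + x j)^2) / (a j * (\<Prod>m\<in>I - {j}. (x m - x j)^2)))"
  define T2 where "T2 = (\<lambda>i j. 8 * x i * x j * (x i + x j) *
               (\<Prod>l\<in>I - {i,j}. \<Prod>m\<in>{i,j}. (x m + x l))
             / (a i * (x j - x i)^2 * (\<Prod>l\<in>I - {i,j}. \<Prod>m\<in>{i,j}. (x m - x l))))"
  let ?D = "VS x I ^ 2 / PP x I I"
  have e1: "(\<Prod>(i,j)\<in>{(i,j). i \<in> I \<and> j \<in> I \<and> i < j}. (x i - x j)^2) = VS x I ^ 2"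
  proof -
    have "VS x I ^ 2 = (\<Prod>(p,q)\<in>Pairs I. (x q - x p)^2)"
      unfolding VS_def prod_power_distrib by (simp add: case_prod_unfold)
    also have "\<dots> = (\<Prod>(i,j)\<in>{(i,j). i \<in> I \<and> j \<in> I \<and> i < j}. (x i - x j)^2)"
      unfolding Pairs_def by (intro prod.cong refl) (auto simp: power2_commute)
    finally show ?thesis by simp
  qed
  have e2: "(\<Prod>(i,j)\<in>I \<times> I. (x i + x j)) = PP x I I"
    unfolding PP_def by (simp add: prod.cartesian_product)
  have tm: "?D * (K / a j * (T1 j - (\<Sum>i\<in>I - {j}. T2 i j))) = G j j + (\<Sum>i\<in>I - {j}. G i j)" if j: "j \<in> I" for j
  proof -
    have "?D * (K / a j * (T1 j - (\<Sum>i\<in>I - {j}. T2 i j))) = ?D * (K / a j * T1 j) + (\<Sum>i\<in>I - {j}. - (?D * (K / a j * T2 i j)))"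
      by (simp add: algebra_simps sum_distrib_left sum_negf)
    also have "?D * (K / a j * T1 j) = G j j"
      unfolding T1_def G_def by (rule diag_term[OF fI pos inj apos j])
    also have "(\<Sum>i\<in>I - {j}. - (?D * (K / a j * T2 i j))) = (\<Sum>i\<in>I - {j}. G i j)"
    proof (intro sum.cong refl)
      fix i assume "i \<in> I - {j}"
      then have i: "i \<in> I" and ij: "i \<noteq> j" by auto
      show "- (?D * (K / a j * T2 i j)) = G i j"
        unfolding T2_def G_def by (rule off_term[OF fI pos inj apos i j ij])
    qed
    finally show ?thesis .
  qed
  have "(1 + (\<Sum>j\<in>I. K / a j * (T1 j - (\<Sum>i\<in>I - {j}. T2 i j)))) * VS x I ^ 2 / PP x I I
      = ?D + (\<Sum>j\<in>I. ?D * (K / a j * (T1 j - (\<Sum>i\<in>I - {j}. T2 i j))))"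
  proof -
    have g: "(1 + S) * V / (P::real) = V / P + V / P * S" for S V P
      by (cases "P = 0") (simp_all add: field_simps)
    show ?thesis unfolding g sum_distrib_left ..
  qed
  also have "\<dots> = ?D + (\<Sum>j\<in>I. G j j + (\<Sum>i\<in>I - {j}. G i j))"
    using tm by simp
  also have "(\<Sum>j\<in>I. G j j + (\<Sum>i\<in>I - {j}. G i j)) = (\<Sum>j\<in>I. \<Sum>i\<in>I. G i j)"
    using sum.remove[OF fI] by (intro sum.cong refl) (simp add: sum.remove[OF fI])
  also have "\<dots> = (\<Sum>i\<in>I. \<Sum>j\<in>I. G i j)" by (rule sum.swap)
  also have "\<dots> = (2 * K) * (\<Sum>i\<in>I. \<Sum>j\<in>I. 1 / a i * (1 / a j) * (VS x I ^ 2 / (Pd x I i * Pd x I j * PP x (I - {i}) (I - {j}))))"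
    unfolding G_def by (simp add: sum_distrib_left)
  finally show ?thesis unfolding e1 e2 T1_def T2_def by simp
qed

lemma ent1:
  fixes X Ai Aj V dd kk c :: real
  assumes "X \<noteq> 0" "Ai \<noteq> 0" "Aj \<noteq> 0"
  shows "V * dd * kk / (2 * X) + c * (V * dd^2 * kk^2 / (Ai * Aj)) = V * dd * kk / 2 * (1 / X + (2 * (c * dd * kk)) * (1 / Ai) * (1 / Aj))"
  using assms by (simp add: field_simps power2_eq_square)

lemma ent2:
  fixes X Ai Aj V dd kk c :: real
  assumes "X \<noteq> 0" "Ai \<noteq> 0" "Aj \<noteq> 0" "c \<noteq> 0"
  shows "(1 / c) * (V * dd * kk / (2 * X)) + V * dd^2 * kk^2 / (Ai * Aj) = V * dd * kk / (2 * c) * (1 / X + (2 * (c * dd * kk)) * (1 / Ai) * (1 / Aj))"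
  using assms by (simp add: field_simps power2_eq_square)

theorem corollary7p5:
  fixes n d k :: nat and V c :: real and tau :: "nat \<Rightarrow> real"
  assumes "d \<ge> 1" and "n \<ge> 2"
    and "V \<ge> 0" and "c > 0"
    and "\<And>i. i < n \<Longrightarrow> tau i > - real d / 2"
    and "\<And>i j. i < j \<Longrightarrow> j < n \<Longrightarrow> tau i < tau j"
    and "1 \<le> k" and "k \<le> n - 1"
  shows "coeff (det_shift_poly n (Sigma_n n d V c tau)) k =
           (if c \<le> 1
            then (-1)^k * Dk n d c tau k * (V * real d * kappa d / 2)^(n - k)
            else (-1)^k * Dk n d c tau k * (V * real d * kappa d / (2 * c))^(n - k))"
proof -
  note tpos = assms(5) and tmono = assms(6)
  let ?x = "xx d tau" and ?a = "aa d tau"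
  define K where "K = c * real d * kappa d"
  define s where "s = (if c \<le> 1 then V * real d * kappa d / 2 else V * real d * kappa d / (2 * c))"
  let ?S = "Sigma_n n d V c tau"
  have kn: "k \<le> n" using assms by simp
  have xpos: "?x p > 0" if "p < n" for p using tpos[OF that] by (simp add: xx_def)
  have apos: "?a p > 0" if "p < n" for p using tpos[OF that] assms(1) by (simp add: aa_def)
  have xinj: "inj_on ?x {0..<n}"
  proof (rule inj_onI)
    fix i j assume i: "i \<in> {0..<n}" and j: "j \<in> {0..<n}" and e: "?x i = ?x j"
    show "i = j"
    proof (rule ccontr)
      assume "i \<noteq> j"
      then consider "i < j" | "j < i" by linarith
      then show False using tmono[of i j] tmono[of j i] i j e by cases (auto simp: xx_def)
    qed
  qed
  have entry: "?S $$ (i,j) = s * (1 / (?x i + ?x j) + (2 * K) * (1 / ?a i) * (1 / ?a j))" if i: "i < n" and j: "j < n" for i j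
  proof -
    have h1: "?x i + ?x j \<noteq> 0" using xpos[OF i] xpos[OF j] by simp
    have h2: "?a i \<noteq> 0" "?a j \<noteq> 0" using apos[OF i] apos[OF j] by auto
    have sb: "Sigma_sb n d V tau $$ (i,j) = V * real d * kappa d / (2 * (?x i + ?x j))"
      using i j by (simp add: Sigma_sb_def)
    have sp: "Sigma_sp n d V tau $$ (i,j) = V * (real d)^2 * (kappa d)^2 / (?a i * ?a j)"
      using i j by (simp add: Sigma_sp_def)
    show ?thesis
    proof (cases "c \<le> 1")
      case True
      then have "?S $$ (i,j) = Sigma_sb n d V tau $$ (i,j) + c * Sigma_sp n d V tau $$ (i,j)"
        using i j by (simp add: Sigma_n_def Sigma_sp_def Sigma_sb_def)
      then show ?thesis unfolding sb sp s_def K_def using True ent1[OF h1 h2] by simp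
    next
      case False
      then have "?S $$ (i,j) = (1 / c) * Sigma_sb n d V tau $$ (i,j) + Sigma_sp n d V tau $$ (i,j)"
        using i j by (simp add: Sigma_n_def Sigma_sp_def Sigma_sb_def)
      moreover have "c \<noteq> 0" using assms(4) by simp
      ultimately show ?thesis unfolding sb sp s_def K_def using False ent2[OF h1 h2] by simp
    qed
  qed
  have perI: "pdet (\<lambda>i j. ?S $$ (i,j)) I = s ^ (n - k) * DI d c tau I"
    if I: "I \<subseteq> {0..<n}" "card I = n - k" for I
  proof -
    have fI: "finite I" using I finite_subset by blast
    have posI: "\<And>p. p \<in> I \<Longrightarrow> ?x p > 0" using I xpos by auto
    have aposI: "\<And>p. p \<in> I \<Longrightarrow> ?a p > 0" using I apos by auto
    have injI: "inj_on ?x I" using I xinj inj_on_subset by blast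
    have "pdet (\<lambda>i j. ?S $$ (i,j)) I = pdet (\<lambda>i j. s * (1 / (?x i + ?x j) + (2 * K) * (1 / ?a i) * (1 / ?a j))) I"
    proof (rule pdet_cong)
      fix i j assume "i \<in> I" "j \<in> I"
      then have "i < n" "j < n" using I by auto
      then show "?S $$ (i,j) = s * (1 / (?x i + ?x j) + (2 * K) * (1 / ?a i) * (1 / ?a j))" by (rule entry)
    qed
    also have "\<dots> = s ^ card I * pdet (\<lambda>i j. 1 / (?x i + ?x j) + (2 * K) * (1 / ?a i) * (1 / ?a j)) I"
      by (rule pdet_scale)
    also have "pdet (\<lambda>i j. 1 / (?x i + ?x j) + (2 * K) * (1 / ?a i) * (1 / ?a j)) I
       = VS ?x I ^ 2 / PP ?x I I + (2 * K) * (\<Sum>i\<in>I. \<Sum>j\<in>I. 1 / ?a i * (1 / ?a j) * (VS ?x I ^ 2 / (Pd ?x I i * Pd ?x I j * PP ?x (I - {i}) (I - {j}))))"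
      by (rule det_M_set[OF fI posI injI])
    also have "\<dots> = DI d c tau I"
      unfolding DI_def Let_def K_def by (rule DI_alg[OF fI posI injI aposI, symmetric])
    finally show ?thesis using I by simp
  qed
  have "coeff (det_shift_poly n ?S) k = (-1)^k * (\<Sum>I | I \<subseteq> {0..<n} \<and> card I = n - k. pdet (\<lambda>i j. ?S $$ (i,j)) I)"
    unfolding det_shift_poly_def by (rule charpoly_coeff[OF kn])
  also have "(\<Sum>I | I \<subseteq> {0..<n} \<and> card I = n - k. pdet (\<lambda>i j. ?S $$ (i,j)) I) = (\<Sum>I | I \<subseteq> {0..<n} \<and> card I = n - k. s ^ (n - k) * DI d c tau I)"
    by (intro sum.cong refl) (auto intro: perI)
  also have "\<dots> = s ^ (n - k) * Dk n d c tau k"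
    unfolding Dk_def by (simp add: sum_distrib_left)
  finally show ?thesis unfolding s_def by (cases "c \<le> 1") (simp_all add: algebra_simps)
qed

end
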